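(* Let $k\ge 3$, let $G_1,\ldots,G_k$ be a finite sequence of pairwise disjoint connected graphs and let $x_i\in V(G_i)$. Let $G$ be the circuit of the graphs $\{G_i\}_{i=1}^k$ with respect to the vertices $\{x_i\}_{i=1}^k$. Then $$SO(G)>\frac{|d_{x_1}-d_{x_k}|}{\sqrt{2}}+\sum_{i=1}^{k}SO(G_i)+\sum_{i=1}^{k-1}\frac{|d_{x_i}-d_{x_{i+1}}|}{\sqrt{2}},$$ where $d_v$ denotes the degree of $v$ in $G$.
   Context: All graphs are finite and simple. For a graph $H$, $SO(H)=\sum_{uv\in E(H)}\sqrt{d_u^2+d_v^2}$, where $d_u$ is the degree of $u$ in $H$ (the Sombor index). The circuit of $G_1,\ldots,G_k$ with respect to $x_1,\ldots,x_k$ is the graph obtained from the disjoint union of $G_1,\ldots,G_k$ and a cycle $C_k$ with vertices $c_1,\ldots,c_k$ in cyclic order, by identifying $x_i$ with $c_i$ for each $i$ (so the edges $x_ix_{i+1}$, $1\le i\le k-1$, and $x_kx_1$ are added). *)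

theory Defs
  imports Complex_Main
begin

type_synonym 'a graph = "'a set \<times> 'a set set"

definition verts :: "'a graph \<Rightarrow> 'a set" where "verts G = fst G"
definition edges :: "'a graph \<Rightarrow> 'a set set" where "edges G = snd G"

definition simple_graph :: "'a graph \<Rightarrow> bool" where
  "simple_graph G \<longleftrightarrow> finite (verts G) \<and>
     (\<forall>e\<in>edges G. \<exists>u v. e = {u, v} \<and> u \<noteq> v \<and> u \<in> verts G \<and> v \<in> verts G)"

definition degree :: "'a graph \<Rightarrow> 'a \<Rightarrow> nat" where
  "degree G v = card {e \<in> edges G. v \<in> e}"

definition adj_rel :: "'a graph \<Rightarrow> ('a \<times> 'a) set" where
  "adj_rel G = {(u, v). {u, v} \<in> edges G}"

definition connected_graph :: "'a graph \<Rightarrow> bool" where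
  "connected_graph G \<longleftrightarrow> simple_graph G \<and> verts G \<noteq> {} \<and>
     (\<forall>u\<in>verts G. \<forall>v\<in>verts G. (u, v) \<in> (adj_rel G)\<^sup>*)"

text \<open>Sombor index: sum over edges uv of sqrt(d_u^2 + d_v^2); for an edge e = {u,v}
  with u \<noteq> v this is sqrt of the sum over the two endpoints.\<close>
definition sombor :: "'a graph \<Rightarrow> real" where
  "sombor G = (\<Sum>e\<in>edges G. sqrt (\<Sum>v\<in>e. (real (degree G v))\<^sup>2))"

definition circuit :: "nat \<Rightarrow> (nat \<Rightarrow> 'a graph) \<Rightarrow> (nat \<Rightarrow> 'a) \<Rightarrow> 'a graph" where
  "circuit k Gs x =
     ((\<Union>i\<in>{1..k}. verts (Gs i)),
      (\<Union>i\<in>{1..k}. edges (Gs i)) \<union> {{x i, x (i + 1)} | i. 1 \<le> i \<and> i \<le> k - 1} \<union> {{x k, x 1}})"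

end

theory Submission
  imports Defs
begin

lemma key_ineq:
  fixes a b :: real
  assumes "a > 0" "b \<ge> 0"
  shows "\<bar>a - b\<bar> / sqrt 2 < sqrt (a\<^sup>2 + b\<^sup>2)"
proof -
  have "\<bar>a - b\<bar> / sqrt 2 = sqrt ((a - b)\<^sup>2 / 2)"
    by (simp add: real_sqrt_divide)
  also have "\<dots> < sqrt (a\<^sup>2 + b\<^sup>2)"
  proof (rule real_sqrt_less_mono)
    have "0 < (a + b)\<^sup>2" using assms by simp
    then show "(a - b)\<^sup>2 / 2 < a\<^sup>2 + b\<^sup>2" by (simp add: power2_eq_square algebra_simps)
  qed
  finally show ?thesis .
qed

theorem mainTheorem3:
  fixes k :: nat and Gs :: "nat \<Rightarrow> 'a graph" and x :: "nat \<Rightarrow> 'a"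
  assumes "k \<ge> 3"
    and "\<And>i. i \<in> {1..k} \<Longrightarrow> connected_graph (Gs i)"
    and "\<And>i j. i \<in> {1..k} \<Longrightarrow> j \<in> {1..k} \<Longrightarrow> i \<noteq> j \<Longrightarrow> verts (Gs i) \<inter> verts (Gs j) = {}"
    and "\<And>i. i \<in> {1..k} \<Longrightarrow> x i \<in> verts (Gs i)"
  shows "sombor (circuit k Gs x) >
     \<bar>real (degree (circuit k Gs x) (x 1)) - real (degree (circuit k Gs x) (x k))\<bar> / sqrt 2
     + (\<Sum>i=1..k. sombor (Gs i))
     + (\<Sum>i=1..k-1. \<bar>real (degree (circuit k Gs x) (x i)) - real (degree (circuit k Gs x) (x (i+1)))\<bar> / sqrt 2)"
proof -
  define G where "G = circuit k Gs x"
  define s where "s i = (if i < k then i + 1 else (1::nat))" for i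
  define f where "f i = {x i, x (s i)}" for i
  define A where "A = (\<Union>i\<in>{1..k}. edges (Gs i))"
  define g where "g e = sqrt (\<Sum>v\<in>e. (real (degree G v))\<^sup>2)" for e
  define d where "d v = real (degree G v)" for v
  have sg: "simple_graph (Gs i)" if "i \<in> {1..k}" for i
    using assms(2)[OF that] connected_graph_def by blast
  have esub: "e \<subseteq> verts (Gs i)" "e \<noteq> {}" if hi: "i \<in> {1..k}" "e \<in> edges (Gs i)" for i e
  proof -
    obtain u v where "e = {u, v}" "u \<in> verts (Gs i)" "v \<in> verts (Gs i)"
      using sg[OF hi(1)] hi(2) unfolding simple_graph_def by blast
    then show "e \<subseteq> verts (Gs i)" "e \<noteq> {}" by auto
  qed
  have finE: "finite (edges (Gs i))" if "i \<in> {1..k}" for i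
  proof -
    have "edges (Gs i) \<subseteq> Pow (verts (Gs i))" using esub[OF that] by blast
    moreover have "finite (verts (Gs i))" using sg[OF that] simple_graph_def by blast
    ultimately show ?thesis by (meson finite_Pow_iff finite_subset)
  qed
  have xeq: "i = j" if "i \<in> {1..k}" "j \<in> {1..k}" "x i = x j" for i j
  proof (rule ccontr)
    assume ne: "i \<noteq> j"
    have "x i \<in> verts (Gs i) \<inter> verts (Gs j)" using assms(4)[OF that(1)] assms(4)[OF that(2)] that(3) by simp
    then show False using assms(3)[OF that(1,2) ne] by simp
  qed
  have srange: "s i \<in> {1..k}" "s i \<noteq> i" if "i \<in> {1..k}" for i
    using that assms(1) by (auto simp: s_def)
  have ss: "s (s i) \<noteq> i" if "i \<in> {1..k}" for i
    using that assms(1) by (auto simp: s_def)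
  have EG: "edges G = A \<union> f ` {1..k}"
  proof -
    have "{{x i, x (i + 1)} | i. 1 \<le> i \<and> i \<le> k - 1} \<union> {{x k, x 1}} = f ` {1..k}"
    proof
      show "{{x i, x (i + 1)} | i. 1 \<le> i \<and> i \<le> k - 1} \<union> {{x k, x 1}} \<subseteq> f ` {1..k}"
      proof
        fix e assume "e \<in> {{x i, x (i + 1)} | i. 1 \<le> i \<and> i \<le> k - 1} \<union> {{x k, x 1}}"
        then consider i where "1 \<le> i" "i \<le> k - 1" "e = {x i, x (i+1)}" | "e = {x k, x 1}" by blast
        then show "e \<in> f ` {1..k}"
        proof cases
          case 1
          then have "e = f i" "i \<in> {1..k}" using assms(1) by (auto simp: f_def s_def)
          then show ?thesis by blast
        next
          case 2
          then have "e = f k" "k \<in> {1..k}" using assms(1) by (auto simp: f_def s_def)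
          then show ?thesis by blast
        qed
      qed
      show "f ` {1..k} \<subseteq> {{x i, x (i + 1)} | i. 1 \<le> i \<and> i \<le> k - 1} \<union> {{x k, x 1}}"
      proof
        fix e assume "e \<in> f ` {1..k}"
        then obtain i where i: "i \<in> {1..k}" "e = f i" by blast
        show "e \<in> {{x i, x (i + 1)} | i. 1 \<le> i \<and> i \<le> k - 1} \<union> {{x k, x 1}}"
        proof (cases "i < k")
          case True
          then have "e = {x i, x (i+1)}" "1 \<le> i" "i \<le> k - 1" using i by (auto simp: f_def s_def)
          then show ?thesis by blast
        next
          case False
          then have "e = {x k, x 1}" using i by (auto simp: f_def s_def)
          then show ?thesis by blast
        qed
      qed
    qed
    then show ?thesis unfolding G_def circuit_def edges_def A_def by (simp only: snd_conv Un_assoc)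
  qed
  have finA: "finite A" unfolding A_def using finE by blast
  have finEG: "finite (edges G)" using EG finA by simp
  have disjAC: "A \<inter> f ` {1..k} = {}"
  proof (rule ccontr)
    assume "A \<inter> f ` {1..k} \<noteq> {}"
    then obtain i j where ij: "i \<in> {1..k}" "j \<in> {1..k}" "f j \<in> edges (Gs i)" unfolding A_def by blast
    then have "x j \<in> verts (Gs i)" "x (s j) \<in> verts (Gs i)" using esub[OF ij(1,3)] by (auto simp: f_def)
    have "x j \<in> verts (Gs j)" "x (s j) \<in> verts (Gs (s j))" using assms(4) ij srange[OF ij(2)] by auto
    have "j = i"
    proof (rule ccontr)
      assume "j \<noteq> i"
      then have "verts (Gs j) \<inter> verts (Gs i) = {}" using assms(3) ij by simp
      then show False using \<open>x j \<in> verts (Gs j)\<close> \<open>x j \<in> verts (Gs i)\<close> by blast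
    qed
    have "s j = i"
    proof (rule ccontr)
      assume "s j \<noteq> i"
      then have "verts (Gs (s j)) \<inter> verts (Gs i) = {}" using assms(3) ij srange[OF ij(2)] by simp
      then show False using \<open>x (s j) \<in> verts (Gs (s j))\<close> \<open>x (s j) \<in> verts (Gs i)\<close> by blast
    qed
    then show False using \<open>j = i\<close> srange[OF ij(2)] by simp
  qed
  have injf: "inj_on f {1..k}"
  proof
    fix i j assume ij: "i \<in> {1..k}" "j \<in> {1..k}" "f i = f j"
    have si: "s i \<in> {1..k}" "s j \<in> {1..k}" using srange ij by auto
    show "i = j"
    proof (rule ccontr)
      assume ne: "i \<noteq> j"
      have "x i \<in> f j" using ij(3) by (auto simp: f_def)
      moreover have "x i \<noteq> x j" using ne xeq[of i j] ij by blast
      ultimately have "x i = x (s j)" by (auto simp: f_def)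
      then have isj: "i = s j" using xeq[of i "s j"] ij si by blast
      have "x (s i) \<in> f j" using ij(3) by (auto simp: f_def)
      then have "x (s i) = x j \<or> x (s i) = x i" using isj by (auto simp: f_def)
      then have "s i = j \<or> s i = i" using xeq[of "s i" j] xeq[of "s i" i] ij si srange[OF ij(1)] by blast
      then show False using isj ss[OF ij(2)] srange[OF ij(1)] by auto
    qed
  qed
  have disjE: "edges (Gs i) \<inter> edges (Gs j) = {}" if hij: "i \<in> {1..k}" "j \<in> {1..k}" "i \<noteq> j" for i j
  proof (rule ccontr)
    assume "edges (Gs i) \<inter> edges (Gs j) \<noteq> {}"
    then obtain e where "e \<in> edges (Gs i)" "e \<in> edges (Gs j)" by blast
    then have "e \<subseteq> verts (Gs i)" "e \<subseteq> verts (Gs j)" "e \<noteq> {}" using esub[OF hij(1)] esub[OF hij(2)] by auto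
    then obtain v where "v \<in> verts (Gs i)" "v \<in> verts (Gs j)" by blast
    then show False using assms(3)[OF hij] by blast
  qed
  have degmono: "degree (Gs i) v \<le> degree G v" if "i \<in> {1..k}" for i v
  proof -
    have "edges (Gs i) \<subseteq> A" unfolding A_def using that by blast
    then have "{e \<in> edges (Gs i). v \<in> e} \<subseteq> {e \<in> edges G. v \<in> e}" unfolding EG by blast
    moreover have "finite {e \<in> edges G. v \<in> e}" using finEG by simp
    ultimately show ?thesis unfolding degree_def by (simp add: card_mono)
  qed
  have degpos: "degree G (x i) > 0" if "i \<in> {1..k}" for i
  proof -
    have "f i \<in> {e \<in> edges G. x i \<in> e}" using EG that by (auto simp: f_def)
    then show ?thesis unfolding degree_def using finEG
      by (auto simp: card_gt_0_iff)
  qed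
  have "sombor G = sum g A + sum g (f ` {1..k})"
    unfolding sombor_def g_def[symmetric] EG
    by (rule sum.union_disjoint) (use finA disjAC in auto)
  moreover have "sum g A = (\<Sum>i\<in>{1..k}. sum g (edges (Gs i)))"
    unfolding A_def by (rule sum.UNION_disjoint) (use finE disjE in auto)
  moreover have "sum g (edges (Gs i)) \<ge> sombor (Gs i)" if "i \<in> {1..k}" for i
    unfolding sombor_def g_def
  proof (rule sum_mono)
    fix e assume "e \<in> edges (Gs i)"
    show "sqrt (\<Sum>v\<in>e. (real (degree (Gs i) v))\<^sup>2) \<le> sqrt (\<Sum>v\<in>e. (real (degree G v))\<^sup>2)"
      by (intro real_sqrt_le_mono sum_mono power_mono) (use degmono[OF that] in auto)
  qed
  moreover have "sum g (f ` {1..k}) = (\<Sum>i\<in>{1..k}. g (f i))"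
    by (rule sum.reindex[OF injf, unfolded comp_def])
  moreover have "g (f i) > \<bar>d (x i) - d (x (s i))\<bar> / sqrt 2" if "i \<in> {1..k}" for i
  proof -
    have "x i \<noteq> x (s i)" using xeq[of i "s i"] srange[OF that] that by auto
    then have "g (f i) = sqrt ((d (x i))\<^sup>2 + (d (x (s i)))\<^sup>2)" by (simp add: g_def f_def d_def)
    then show ?thesis using key_ineq[of "d (x i)" "d (x (s i))"] degpos[OF that] by (simp add: d_def)
  qed
  moreover have "(\<Sum>i\<in>{1..k}. \<bar>d (x i) - d (x (s i))\<bar> / sqrt 2) =
     \<bar>d (x 1) - d (x k)\<bar> / sqrt 2 + (\<Sum>i=1..k-1. \<bar>d (x i) - d (x (i+1))\<bar> / sqrt 2)"
  proof -
    have k: "{1..k} = insert k {1..k-1}" using assms(1) by auto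
    have "(\<Sum>i\<in>{1..k}. \<bar>d (x i) - d (x (s i))\<bar> / sqrt 2) =
       \<bar>d (x k) - d (x (s k))\<bar> / sqrt 2 + (\<Sum>i=1..k-1. \<bar>d (x i) - d (x (s i))\<bar> / sqrt 2)"
      unfolding k by (subst sum.insert) auto
    also have "(\<Sum>i=1..k-1. \<bar>d (x i) - d (x (s i))\<bar> / sqrt 2) = (\<Sum>i=1..k-1. \<bar>d (x i) - d (x (i+1))\<bar> / sqrt 2)"
      by (rule sum.cong) (auto simp: s_def)
    finally show ?thesis by (simp add: s_def abs_minus_commute)
  qed
  ultimately have "sombor G > \<bar>d (x 1) - d (x k)\<bar> / sqrt 2 + (\<Sum>i=1..k. sombor (Gs i))
      + (\<Sum>i=1..k-1. \<bar>d (x i) - d (x (i+1))\<bar> / sqrt 2)"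
  proof -
    assume h: "sombor G = sum g A + sum g (f ` {1..k})"
      "sum g A = (\<Sum>i\<in>{1..k}. sum g (edges (Gs i)))"
      "\<And>i. i \<in> {1..k} \<Longrightarrow> sum g (edges (Gs i)) \<ge> sombor (Gs i)"
      "sum g (f ` {1..k}) = (\<Sum>i\<in>{1..k}. g (f i))"
      "\<And>i. i \<in> {1..k} \<Longrightarrow> g (f i) > \<bar>d (x i) - d (x (s i))\<bar> / sqrt 2"
      "(\<Sum>i\<in>{1..k}. \<bar>d (x i) - d (x (s i))\<bar> / sqrt 2) =
        \<bar>d (x 1) - d (x k)\<bar> / sqrt 2 + (\<Sum>i=1..k-1. \<bar>d (x i) - d (x (i+1))\<bar> / sqrt 2)"
    have "(\<Sum>i=1..k. sombor (Gs i)) \<le> sum g A" unfolding h(2) by (rule sum_mono) (use h(3) in auto)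
    moreover have "(\<Sum>i\<in>{1..k}. \<bar>d (x i) - d (x (s i))\<bar> / sqrt 2) < sum g (f ` {1..k})"
      unfolding h(4) by (rule sum_strict_mono) (use h(5) assms(1) in auto)
    ultimately show ?thesis using h(1,6) by linarith
  qed
  then show ?thesis unfolding G_def d_def .
qed

end
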